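(* Let $(\Omega,\mathcal F,(\mathcal F_t)_{t\in[0,T]},P)$ be a filtered, complete probability space with right-continuous filtration that supports a one-dimensional $(\mathcal F_t)$-Brownian motion. Let $(D_t)_{t\in[0,T]}$ be a distribution invariant dynamic deviation measure, let $t\in[0,T]$, and let $Y\in L^2(\mathcal F_T)$ be independent of $\mathcal F_t$. Then $D_t(Y)$ is a.s. constant and $D_t(Y)=D_0(Y)$.
   Context: $L^2(\mathcal F_t)$ is the space of $\mathcal F_t$-measurable square-integrable random variables, $L^2_+(\mathcal F_t)$ and $L^\infty(\mathcal F_t)$ its non-negative and bounded elements. A dynamic deviation measure is a family $(D_t)_{t\in[0,T]}$ of maps $D_t:L^2(\mathcal F_T)\to L^2_+(\mathcal F_t)$ with $D_t(0)=0$ satisfying: (D1) $D_t(X+m)=D_t(X)$ for $m\in L^\infty(\mathcal F_t)$; (D2) $D_t(X)\ge0$, with $D_t(X)=0$ iff $X$ is $\mathcal F_t$-measurable; (D3) $D_t(\lambda X+(1-\lambda)Y)\le\lambda D_t(X)+(1-\lambda)D_t(Y)$ for $\lambda\in L^\infty(\mathcal F_t)$, $0\le\lambda\le1$; (D4) if $X^n\to X$ in $L^2$ then $D_t(X^n)\to D_t(X)$; (D5) $D_t(X)=D_t(E[X\mid\mathcal F_s])+E[D_s(X)\mid\mathcal F_t]$ for $t\le s$. $D$ is distribution invariant if $D_0(X_1)=D_0(X_2)$ whenever $X_1,X_2$ have the same distribution. *)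

theory Defs
  imports "HOL-Probability.Probability"
begin

text \<open>Square-integrable random variables measurable w.r.t. a sub-sigma-algebra G of M
  (representatives of elements of L2(G)).\<close>
definition L2 :: "'a measure \<Rightarrow> 'a measure \<Rightarrow> ('a \<Rightarrow> real) \<Rightarrow> bool" where
  "L2 M G f \<longleftrightarrow> f \<in> borel_measurable G \<and> integrable M (\<lambda>x. (f x)\<^sup>2)"

definition filtered_complete_prob_space ::
  "'a measure \<Rightarrow> (real \<Rightarrow> 'a measure) \<Rightarrow> real \<Rightarrow> bool" where
  "filtered_complete_prob_space M F T \<longleftrightarrow>
     prob_space M \<and> complete_measure M \<and> 0 < T \<and>
     (\<forall>t\<in>{0..T}. subalgebra M (F t)) \<and>
     (\<forall>s\<in>{0..T}. \<forall>t\<in>{0..T}. s \<le> t \<longrightarrow> sets (F s) \<subseteq> sets (F t)) \<and>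
     (\<forall>t\<in>{0..<T}. sets (F t) = (\<Inter>s\<in>{t<..T}. sets (F s)))"

definition brownian_motion ::
  "'a measure \<Rightarrow> (real \<Rightarrow> 'a measure) \<Rightarrow> real \<Rightarrow> (real \<Rightarrow> 'a \<Rightarrow> real) \<Rightarrow> bool" where
  "brownian_motion M F T W \<longleftrightarrow>
     (\<forall>t\<in>{0..T}. W t \<in> borel_measurable (F t)) \<and>
     (AE x in M. W 0 x = 0) \<and>
     (AE x in M. continuous_on {0..T} (\<lambda>t. W t x)) \<and>
     (\<forall>s t. 0 \<le> s \<longrightarrow> s < t \<longrightarrow> t \<le> T \<longrightarrow>
        distr M borel (\<lambda>x. W t x - W s x) = density lborel (normal_density 0 (sqrt (t - s))) \<and>
        prob_space.indep_set M (sets (vimage_algebra (space M) (\<lambda>x. W t x - W s x) borel))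
                               (sets (F s)))"

text \<open>Dynamic deviation measure (D_t), t in [0,T], on L2(F_T); D t X is a representative
  of the class D_t(X); all identities are almost sure.\<close>
definition dynamic_deviation_measure ::
  "'a measure \<Rightarrow> (real \<Rightarrow> 'a measure) \<Rightarrow> real \<Rightarrow> (real \<Rightarrow> ('a \<Rightarrow> real) \<Rightarrow> ('a \<Rightarrow> real)) \<Rightarrow> bool" where
  "dynamic_deviation_measure M F T D \<longleftrightarrow>
     \<comment> \<open>D_t maps L2(F_T) into L2_+(F_t), well defined on a.s.-classes\<close>
     (\<forall>t\<in>{0..T}. \<forall>X. L2 M (F T) X \<longrightarrow> L2 M (F t) (D t X) \<and> (AE x in M. 0 \<le> D t X x)) \<and>
     (\<forall>t\<in>{0..T}. \<forall>X X'. L2 M (F T) X \<longrightarrow> L2 M (F T) X' \<longrightarrow> (AE x in M. X x = X' x) \<longrightarrow>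
        (AE x in M. D t X x = D t X' x)) \<and>
     \<comment> \<open>D_t(0) = 0\<close>
     (\<forall>t\<in>{0..T}. AE x in M. D t (\<lambda>_. 0) x = 0) \<and>
     \<comment> \<open>(D1)\<close>
     (\<forall>t\<in>{0..T}. \<forall>X m. L2 M (F T) X \<longrightarrow> m \<in> borel_measurable (F t) \<longrightarrow>
        (\<exists>B. AE x in M. \<bar>m x\<bar> \<le> B) \<longrightarrow>
        (AE x in M. D t (\<lambda>y. X y + m y) x = D t X x)) \<and>
     \<comment> \<open>(D2)\<close>
     (\<forall>t\<in>{0..T}. \<forall>X. L2 M (F T) X \<longrightarrow>
        (AE x in M. 0 \<le> D t X x) \<and>
        ((AE x in M. D t X x = 0) \<longleftrightarrow>
           (\<exists>g\<in>borel_measurable (F t). AE x in M. X x = g x))) \<and>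
     \<comment> \<open>(D3)\<close>
     (\<forall>t\<in>{0..T}. \<forall>X Y l. L2 M (F T) X \<longrightarrow> L2 M (F T) Y \<longrightarrow> l \<in> borel_measurable (F t) \<longrightarrow>
        (AE x in M. 0 \<le> l x \<and> l x \<le> 1) \<longrightarrow>
        (AE x in M. D t (\<lambda>y. l y * X y + (1 - l y) * Y y) x
                      \<le> l x * D t X x + (1 - l x) * D t Y x)) \<and>
     \<comment> \<open>(D4) continuity in L2\<close>
     (\<forall>t\<in>{0..T}. \<forall>Xs X. (\<forall>n. L2 M (F T) (Xs n)) \<longrightarrow> L2 M (F T) X \<longrightarrow>
        (\<lambda>n. integral\<^sup>L M (\<lambda>x. (Xs n x - X x)\<^sup>2)) \<longlonglongrightarrow> 0 \<longrightarrow>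
        (\<lambda>n. integral\<^sup>L M (\<lambda>x. (D t (Xs n) x - D t X x)\<^sup>2)) \<longlonglongrightarrow> 0) \<and>
     \<comment> \<open>(D5) time consistency\<close>
     (\<forall>t\<in>{0..T}. \<forall>s\<in>{0..T}. \<forall>X. t \<le> s \<longrightarrow> L2 M (F T) X \<longrightarrow>
        (AE x in M. D t X x = D t (real_cond_exp M (F s) X) x + real_cond_exp M (F t) (D s X) x))"

definition distribution_invariant ::
  "'a measure \<Rightarrow> (real \<Rightarrow> 'a measure) \<Rightarrow> real \<Rightarrow> (real \<Rightarrow> ('a \<Rightarrow> real) \<Rightarrow> ('a \<Rightarrow> real)) \<Rightarrow> bool" where
  "distribution_invariant M F T D \<longleftrightarrow>
     (\<forall>X1 X2. L2 M (F T) X1 \<longrightarrow> L2 M (F T) X2 \<longrightarrow> distr M borel X1 = distr M borel X2 \<longrightarrow>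
        (AE x in M. D 0 X1 x = D 0 X2 x))"

end

theory Submission
  imports Defs
begin

lemma normal_interval_bound:
  assumes "0 < \<sigma>" "s \<le> r"
  shows "measure (density lborel (normal_density 0 \<sigma>)) {s<..r} \<le> (r - s) / sqrt (2*pi*\<sigma>\<^sup>2)"
proof -
  let ?K = "1 / sqrt (2*pi*\<sigma>\<^sup>2)"
  have b: "normal_density 0 \<sigma> x \<le> ?K" for x
    unfolding normal_density_def by (rule mult_left_le) auto
  have "emeasure (density lborel (normal_density 0 \<sigma>)) {s<..r}
      = (\<integral>\<^sup>+ x. ennreal (normal_density 0 \<sigma> x) * indicator {s<..r} x \<partial>lborel)"
    by (rule emeasure_density) auto
  also have "\<dots> \<le> (\<integral>\<^sup>+ x. ennreal ?K * indicator {s<..r} x \<partial>lborel)"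
    by (intro nn_integral_mono) (auto simp: b split: split_indicator)
  also have "\<dots> = ennreal ?K * ennreal (r - s)"
    using assms by (simp add: nn_integral_cmult_indicator)
  also have "\<dots> = ennreal ((r - s) / sqrt (2*pi*\<sigma>\<^sup>2))"
    using assms by (simp add: ennreal_mult'[symmetric])
  finally show ?thesis
    unfolding measure_def using assms by (simp add: enn2real_leI)
qed

lemma split_set:
  assumes P: "prob_space M" and V[measurable]: "V \<in> borel_measurable M"
    and law: "distr M borel V = density lborel (normal_density 0 \<sigma>)" and \<sigma>: "0 < \<sigma>"
    and C[measurable]: "C \<in> sets M" and p: "0 < p" "p < measure M C"
  shows "\<exists>r. measure M (C \<inter> {x\<in>space M. V x \<le> r}) = p"
proof -
  interpret prob_space M by (rule P)
  define g where "g r = measure M (C \<inter> {x\<in>space M. V x \<le> r})" for r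
  define K where "K = 1 / sqrt (2*pi*\<sigma>\<^sup>2)"
  have K: "K \<ge> 0" by (simp add: K_def)
  have sets[measurable]: "C \<inter> {x\<in>space M. V x \<le> r} \<in> sets M" for r by measurable
  have mono: "g s \<le> g r" if "s \<le> r" for s r
    unfolding g_def using that by (intro finite_measure_mono) auto
  have diff: "g r - g s \<le> K * (r - s)" if "s \<le> r" for s r
  proof -
    have "C \<inter> {x\<in>space M. V x \<le> r} \<subseteq> (C \<inter> {x\<in>space M. V x \<le> s}) \<union> (V -` {s<..r} \<inter> space M)" by auto
    hence "g r \<le> measure M ((C \<inter> {x\<in>space M. V x \<le> s}) \<union> (V -` {s<..r} \<inter> space M))"
      unfolding g_def by (intro finite_measure_mono) auto
    also have "\<dots> \<le> g s + measure M (V -` {s<..r} \<inter> space M)"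
      unfolding g_def by (intro measure_subadditive) auto
    also have "measure M (V -` {s<..r} \<inter> space M) = measure (distr M borel V) {s<..r}"
      by (simp add: measure_distr)
    also have "\<dots> \<le> (r - s) / sqrt (2*pi*\<sigma>\<^sup>2)"
      unfolding law using normal_interval_bound[OF \<sigma> that] .
    finally show ?thesis by (simp add: K_def)
  qed
  have cont: "continuous_on UNIV g"
  proof (rule lipschitz_on_continuous_on)
    show "K-lipschitz_on UNIV g"
    proof (rule lipschitz_onI)
      fix x y :: real
      show "dist (g x) (g y) \<le> K * dist x y"
      proof (cases "x \<le> y")
        case True
        then show ?thesis using diff[OF True] mono[OF True] by (simp add: dist_real_def)
      next
        case False
        then have "y \<le> x" by simp
        then show ?thesis using diff[OF \<open>y \<le> x\<close>] mono[OF \<open>y \<le> x\<close>] by (simp add: dist_real_def abs_minus_commute)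
      qed
    qed (rule K)
  qed
  have inc: "(\<lambda>n. g (real n)) \<longlonglongrightarrow> measure M C"
  proof -
    have "(\<lambda>n. measure M (C \<inter> {x\<in>space M. V x \<le> real n})) \<longlonglongrightarrow> measure M (\<Union>n. C \<inter> {x\<in>space M. V x \<le> real n})"
      by (intro finite_Lim_measure_incseq) (auto simp: incseq_def)
    moreover have "(\<Union>n. C \<inter> {x\<in>space M. V x \<le> real n}) = C"
      using sets.sets_into_space[OF C] by (auto intro: real_nat_ceiling_ge)
    ultimately show ?thesis by (simp add: g_def)
  qed
  have dec: "(\<lambda>n. g (- real n)) \<longlonglongrightarrow> 0"
  proof -
    have "(\<lambda>n. measure M (C \<inter> {x\<in>space M. V x \<le> - real n})) \<longlonglongrightarrow> measure M (\<Inter>n. C \<inter> {x\<in>space M. V x \<le> - real n})"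
      by (intro finite_Lim_measure_decseq) (auto simp: decseq_def)
    moreover have "(\<Inter>n. C \<inter> {x\<in>space M. V x \<le> - real n}) = {}"
    proof safe
      fix x assume "x \<in> (\<Inter>n. C \<inter> {x\<in>space M. V x \<le> - real n})"
      moreover obtain n :: nat where "- V x < real n" using reals_Archimedean2 by blast
      ultimately show "x \<in> {}" by (metis (mono_tags, lifting) IntE UNIV_I INT_E mem_Collect_eq minus_less_iff not_le)
    qed
    ultimately show ?thesis by (simp add: g_def)
  qed
  obtain n where n: "p < g (real n)"
    using order_tendstoD(1)[OF inc p(2)] by (auto simp: eventually_sequentially)
  obtain m where m: "g (- real m) < p"
    using order_tendstoD(2)[OF dec p(1)] by (auto simp: eventually_sequentially)
  have "\<exists>r. - real m \<le> r \<and> r \<le> real n \<and> g r = p"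
    by (rule IVT') (use n m in \<open>auto intro: continuous_on_subset[OF cont]\<close>)
  then show ?thesis unfolding g_def by blast
qed

lemma fcps_facts:
  assumes fc: "filtered_complete_prob_space M F T" and t: "t \<in> {0..T}"
  shows "prob_space M" "subalgebra M (F t)" "sets (F t) \<subseteq> sets (F T)" "space (F t) = space M"
    "sigma_finite_subalgebra M (F t)" "sets (F t) \<subseteq> sets M" "0 < T"
proof -
  show P: "prob_space M" using fc unfolding filtered_complete_prob_space_def by blast
  show S: "subalgebra M (F t)" using fc t unfolding filtered_complete_prob_space_def by blast
  show "sets (F t) \<subseteq> sets (F T)" using fc t unfolding filtered_complete_prob_space_def by auto
  show "space (F t) = space M" using S unfolding subalgebra_def by auto
  show "sets (F t) \<subseteq> sets M" using S unfolding subalgebra_def by auto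
  show "0 < T" using fc unfolding filtered_complete_prob_space_def by auto
  show "sigma_finite_subalgebra M (F t)"
    apply (rule finite_measure_subalgebra_is_sigma_finite)
    unfolding finite_measure_subalgebra_def finite_measure_subalgebra_axioms_def
    using P S unfolding prob_space_def by blast
qed

lemma meas_FT_M:
  assumes fc: "filtered_complete_prob_space M F T" and t: "t \<in> {0..T}"
    and f: "f \<in> borel_measurable (F t)"
  shows "f \<in> borel_measurable M"
  using measurable_from_subalg[OF fcps_facts(2)[OF fc t] f] .

lemma meas_Ft_FT:
  assumes fc: "filtered_complete_prob_space M F T" and t: "t \<in> {0..T}"
    and f: "f \<in> borel_measurable (F t)"
  shows "f \<in> borel_measurable (F T)"
proof -
  have T: "T \<in> {0..T}" using fcps_facts(7)[OF fc t] by auto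
  have "subalgebra (F T) (F t)"
    using fcps_facts[OF fc t] fcps_facts[OF fc T] unfolding subalgebra_def by auto
  then show ?thesis using measurable_from_subalg f by blast
qed

lemma L2_indicator_mult:
  assumes fc: "filtered_complete_prob_space M F T" and X: "L2 M (F T) X"
    and A: "A \<in> sets (F T)"
  shows "L2 M (F T) (\<lambda>y. indicator A y * X y)"
proof -
  have T: "T \<in> {0..T}" using fc unfolding filtered_complete_prob_space_def by auto
  have AM: "A \<in> sets M" using fcps_facts(6)[OF fc T] A by auto
  have m: "X \<in> borel_measurable (F T)" using X unfolding L2_def by auto
  have i: "integrable M (\<lambda>x. (X x)\<^sup>2)" using X unfolding L2_def by auto
  have "(\<lambda>y. indicator A y * X y) \<in> borel_measurable (F T)"
    using m A by measurable
  moreover have "integrable M (\<lambda>y. indicator A y * (X y)\<^sup>2)"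
    using integrable_mult_indicator[OF AM i] by simp
  moreover have "(\<lambda>y. (indicator A y * X y)\<^sup>2) = (\<lambda>y. indicator A y * (X y)\<^sup>2)"
    by (auto simp: fun_eq_iff split: split_indicator)
  ultimately show ?thesis unfolding L2_def by simp
qed

lemma L2_bounded:
  assumes fc: "filtered_complete_prob_space M F T" and t: "t \<in> {0..T}"
    and f: "f \<in> borel_measurable (F t)" and B: "\<And>x. \<bar>f x\<bar> \<le> B"
  shows "L2 M (F T) f"
proof -
  interpret prob_space M using fcps_facts[OF fc t] by auto
  have fM: "f \<in> borel_measurable M" using meas_FT_M[OF fc t f] .
  have "integrable M (\<lambda>x. (f x)\<^sup>2)"
  proof (rule integrable_const_bound[where B="B\<^sup>2"])
    show "AE x in M. norm ((f x)\<^sup>2) \<le> B\<^sup>2"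
    proof (intro AE_I2)
      fix x
      have "\<bar>f x\<bar>\<^sup>2 \<le> B\<^sup>2" by (rule power_mono) (use B[of x] in auto)
      then show "norm ((f x)\<^sup>2) \<le> B\<^sup>2" by simp
    qed
  qed (use fM in measurable)
  then show ?thesis unfolding L2_def using meas_Ft_FT[OF fc t f] by simp
qed

lemma L2_integrable:
  assumes fc: "filtered_complete_prob_space M F T" and X: "L2 M (F T) X"
  shows "integrable M X"
proof -
  have T: "T \<in> {0..T}" using fc unfolding filtered_complete_prob_space_def by auto
  interpret prob_space M using fcps_facts[OF fc T] by auto
  have m: "X \<in> borel_measurable M" using X meas_FT_M[OF fc T] unfolding L2_def by auto
  show ?thesis
    using square_integrable_imp_integrable[OF m] X unfolding L2_def by auto
qed

lemma locality:
  assumes fc: "filtered_complete_prob_space M F T" and dd: "dynamic_deviation_measure M F T D"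
    and t: "t \<in> {0..T}" and A: "A \<in> sets (F t)" and X: "L2 M (F T) X"
  shows "AE x in M. D t (\<lambda>y. indicator A y * X y) x = indicator A x * D t X x"
proof -
  have D3: "\<And>X Y l. L2 M (F T) X \<Longrightarrow> L2 M (F T) Y \<Longrightarrow> l \<in> borel_measurable (F t) \<Longrightarrow>
        (AE x in M. 0 \<le> l x \<and> l x \<le> 1) \<Longrightarrow>
        (AE x in M. D t (\<lambda>y. l y * X y + (1 - l y) * Y y) x
                      \<le> l x * D t X x + (1 - l x) * D t Y x)"
    using dd t unfolding dynamic_deviation_measure_def by blast
  have D0: "AE x in M. D t (\<lambda>_. 0) x = 0"
    using dd t unfolding dynamic_deviation_measure_def by blast
  have pos: "\<And>X. L2 M (F T) X \<Longrightarrow> AE x in M. 0 \<le> D t X x"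
    using dd t unfolding dynamic_deviation_measure_def by blast
  have AT: "A \<in> sets (F T)" using A fcps_facts(3)[OF fc t] by auto
  have l: "indicator A \<in> borel_measurable (F t)" using A by measurable
  have l01: "AE x in M. 0 \<le> (indicator A x::real) \<and> indicator A x \<le> (1::real)"
    by (intro AE_I2) (auto split: split_indicator)
  have L0: "L2 M (F T) (\<lambda>_. 0)"
    by (rule L2_bounded[OF fc t, of _ 0]) auto
  have LA: "L2 M (F T) (\<lambda>y. indicator A y * X y)" by (rule L2_indicator_mult[OF fc X AT])
  have LB: "L2 M (F T) (\<lambda>y. (1 - indicator A y) * X y)"
  proof -
    have T: "T \<in> {0..T}" using t by auto
    have AM: "A \<in> sets M" using fcps_facts(6)[OF fc T] AT by auto
    have m: "X \<in> borel_measurable (F T)" using X unfolding L2_def by auto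
    have ii: "integrable M (\<lambda>x. (X x)\<^sup>2)" using X unfolding L2_def by auto
    have "(\<lambda>y. (1 - indicator A y) * X y) \<in> borel_measurable (F T)"
      using m AT by measurable
    moreover have "integrable M (\<lambda>y. (X y)\<^sup>2 - indicator A y * (X y)\<^sup>2)"
      using integrable_mult_indicator[OF AM ii] ii by simp
    moreover have "(\<lambda>y. ((1 - indicator A y) * X y)\<^sup>2) = (\<lambda>y. (X y)\<^sup>2 - indicator A y * (X y)\<^sup>2)"
      by (auto simp: fun_eq_iff split: split_indicator)
    ultimately show ?thesis unfolding L2_def by simp
  qed
  have i1: "AE x in M. D t (\<lambda>y. indicator A y * X y) x \<le> indicator A x * D t X x + (1 - indicator A x) * D t (\<lambda>_. 0) x"
    using D3[OF X L0 l l01] by simp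
  have eq: "(\<lambda>y. indicator A y * (indicator A y * X y) + (1 - indicator A y) * ((1 - indicator A y) * X y)) = X"
    by (auto simp: fun_eq_iff split: split_indicator)
  have i2: "AE x in M. D t X x \<le> indicator A x * D t (\<lambda>y. indicator A y * X y) x + (1 - indicator A x) * D t (\<lambda>y. (1 - indicator A y) * X y) x"
    using D3[OF LA LB l l01] unfolding eq .
  show ?thesis
    using i1 i2 D0 pos[OF LA]
  proof eventually_elim
    case (elim x)
    then show ?case by (cases "x \<in> A") (simp_all add: antisym)
  qed
qed
lemma indep_set_swap_mono:
  assumes P: "prob_space M" and ind: "prob_space.indep_set M A B" and "A' \<subseteq> A" "B' \<subseteq> B"
  shows "prob_space.indep_set M B' A'"
proof -
  interpret prob_space M by (rule P)
  show ?thesis using ind assms(3,4) unfolding indep_sets2_eq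
    apply auto by (metis Int_commute mult.commute subsetD)
qed

lemma indep_integral:
  assumes fc: "filtered_complete_prob_space M F T" and t: "t \<in> {0..T}" and Y: "L2 M (F T) Y"
    and ind: "prob_space.indep_set M (sets (vimage_algebra (space M) Y borel)) (sets (F t))"
    and A: "A \<in> sets (F t)"
  shows "integral\<^sup>L M (\<lambda>x. indicator A x * Y x) = measure M A * integral\<^sup>L M Y"
proof -
  interpret prob_space M using fcps_facts[OF fc t] by auto
  have T: "T \<in> {0..T}" using t by auto
  have AM: "A \<in> sets M" using fcps_facts(6)[OF fc t] A by auto
  have YM: "Y \<in> borel_measurable M" using Y meas_FT_M[OF fc T] unfolding L2_def by auto
  have iY: "integrable M Y" by (rule L2_integrable[OF fc Y])
  have iA: "integrable M (indicator A :: 'a \<Rightarrow> real)" using AM by (intro integrable_real_indicator) (auto simp: less_top[symmetric])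
  have sub: "sigma_sets (space M) {indicator A -` S \<inter> space M | S. S \<in> sets (borel :: real measure)} \<subseteq> sets (F t)"
  proof -
    have sa: "sigma_algebra (space M) (sets (F t))"
      using sets.sigma_algebra_axioms[of "F t"] fcps_facts(4)[OF fc t] by simp
    have "{indicator A -` S \<inter> space M | S. S \<in> sets (borel :: real measure)} \<subseteq> sets (F t)"
    proof safe
      fix S :: "real set" assume "S \<in> sets borel"
      moreover have "indicator A \<in> measurable (F t) (borel :: real measure)" using A by measurable
      ultimately have "indicator A -` S \<inter> space (F t) \<in> sets (F t)" by (rule measurable_sets[rotated])
      then show "indicator A -` S \<inter> space M \<in> sets (F t)" using fcps_facts(4)[OF fc t] by simp
    qed
    then show ?thesis by (rule sigma_algebra.sigma_sets_subset[OF sa])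
  qed
  have "indep_var borel (indicator A :: 'a \<Rightarrow> real) borel Y"
    unfolding indep_var_eq
  proof (intro conjI)
    show "random_variable borel (indicator A :: 'a \<Rightarrow> real)" using AM by measurable
    show "random_variable borel Y" using YM .
    show "indep_set (sigma_sets (space M) {indicator A -` S \<inter> space M | S. S \<in> sets (borel :: real measure)})
        (sigma_sets (space M) {Y -` S \<inter> space M | S. S \<in> sets (borel :: real measure)})"
      by (rule indep_set_swap_mono[OF prob_space_axioms ind]) (auto simp: sets_vimage_algebra sub)
  qed
  from indep_var_lebesgue_integral[OF this iA iY] show ?thesis using AM by (simp add: Int_absorb2 sets.sets_into_space)
qed

lemma cond_exp_indep:
  assumes fc: "filtered_complete_prob_space M F T" and t: "t \<in> {0..T}" and Y: "L2 M (F T) Y"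
    and ind: "prob_space.indep_set M (sets (vimage_algebra (space M) Y borel)) (sets (F t))"
  shows "AE x in M. real_cond_exp M (F t) Y x = integral\<^sup>L M Y"
proof -
  interpret prob_space M using fcps_facts[OF fc t] by auto
  interpret sigma_finite_subalgebra M "F t" using fcps_facts[OF fc t] by auto
  have iY: "integrable M Y" by (rule L2_integrable[OF fc Y])
  show ?thesis
  proof (rule real_cond_exp_charact)
    fix A assume A: "A \<in> sets (F t)"
    have AM: "A \<in> sets M" using fcps_facts(6)[OF fc t] A by auto
    have "(\<integral>x\<in>A. Y x \<partial>M) = integral\<^sup>L M (\<lambda>x. indicator A x * Y x)"
      by (simp add: set_lebesgue_integral_def)
    also have "\<dots> = measure M A * integral\<^sup>L M Y" by (rule indep_integral[OF fc t Y ind A])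
    also have "\<dots> = (\<integral>x\<in>A. integral\<^sup>L M Y \<partial>M)"
      using AM by (simp add: set_lebesgue_integral_def)
    finally show "(\<integral>x\<in>A. Y x \<partial>M) = (\<integral>x\<in>A. integral\<^sup>L M Y \<partial>M)" .
  qed (use iY in auto)
qed

lemma distr_indicator_eq:
  fixes U :: "'a \<Rightarrow> real"
  assumes P: "prob_space M" and U[measurable]: "U \<in> borel_measurable M"
    and A[measurable]: "A \<in> sets M" and B[measurable]: "B \<in> sets M"
    and hAB: "\<And>S. S \<in> sets borel \<Longrightarrow> measure M (A \<inter> (U -` S \<inter> space M)) = measure M (B \<inter> (U -` S \<inter> space M))"
    and pAB: "measure M A = measure M B"
  shows "distr M borel (\<lambda>x. indicator A x * U x) = distr M borel (\<lambda>x. indicator B x * U x)"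
proof -
  interpret prob_space M by (rule P)
  have key: "measure M ((\<lambda>x. indicator A x * U x) -` S \<inter> space M)
     = measure M (A \<inter> (U -` S \<inter> space M)) + (if 0 \<in> S then 1 - measure M A else 0)"
    if A[measurable]: "A \<in> sets M" and S[measurable]: "S \<in> sets borel" for A S
  proof -
    have pre: "(\<lambda>x. indicator A x * U x) -` S \<inter> space M = (A \<inter> (U -` S \<inter> space M)) \<union> (if 0 \<in> S then space M - A else {})"
      by (auto simp: indicator_def of_bool_def split: if_splits)
    have "measure M ((A \<inter> (U -` S \<inter> space M)) \<union> (if 0 \<in> S then space M - A else {}))
        = measure M (A \<inter> (U -` S \<inter> space M)) + measure M (if 0 \<in> S then space M - A else {})"
      by (intro finite_measure_Union) auto
    also have "measure M (if 0 \<in> S then space M - A else {}) = (if 0 \<in> S then 1 - measure M A else 0)"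
      by (auto simp: prob_compl)
    finally show ?thesis unfolding pre .
  qed
  show ?thesis
  proof (rule measure_eqI)
    fix S assume "S \<in> sets (distr M borel (\<lambda>x. indicator A x * U x))"
    then have S[measurable]: "S \<in> sets borel" by simp
    have "emeasure (distr M borel (\<lambda>x. indicator A x * U x)) S = emeasure M ((\<lambda>x. indicator A x * U x) -` S \<inter> space M)"
      by (rule emeasure_distr) auto
    also have "\<dots> = ennreal (measure M ((\<lambda>x. indicator A x * U x) -` S \<inter> space M))"
      by (simp add: emeasure_eq_measure)
    also have "\<dots> = ennreal (measure M ((\<lambda>x. indicator B x * U x) -` S \<inter> space M))"
      using key[OF A S] key[OF B S] hAB[OF S] pAB by simp
    also have "\<dots> = emeasure M ((\<lambda>x. indicator B x * U x) -` S \<inter> space M)"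
      by (simp add: emeasure_eq_measure)
    also have "\<dots> = emeasure (distr M borel (\<lambda>x. indicator B x * U x)) S"
      by (rule emeasure_distr[symmetric]) auto
    finally show "emeasure (distr M borel (\<lambda>x. indicator A x * U x)) S = emeasure (distr M borel (\<lambda>x. indicator B x * U x)) S" .
  qed simp
qed

lemma L2_ae:
  assumes fc: "filtered_complete_prob_space M F T" and t: "t \<in> {0..T}"
    and f: "f \<in> borel_measurable (F t)" and g: "L2 M (F T) g" and ae: "AE x in M. f x = g x"
  shows "L2 M (F T) f"
proof -
  have T: "T \<in> {0..T}" using t by auto
  have fM[measurable]: "f \<in> borel_measurable M" using meas_FT_M[OF fc t f] .
  have gM[measurable]: "g \<in> borel_measurable M" using g meas_FT_M[OF fc T] unfolding L2_def by auto
  have "integrable M (\<lambda>x. (g x)\<^sup>2)" using g unfolding L2_def by auto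
  moreover have "AE x in M. (g x)\<^sup>2 = (f x)\<^sup>2" using ae by auto
  ultimately have "integrable M (\<lambda>x. (f x)\<^sup>2)"
    using integrable_cong_AE_imp[of M "\<lambda>x. (g x)\<^sup>2" "\<lambda>x. (f x)\<^sup>2"] by simp
  then show ?thesis unfolding L2_def using meas_Ft_FT[OF fc t f] by simp
qed

lemma L2_integrable':
  assumes fc: "filtered_complete_prob_space M F T" and t: "t \<in> {0..T}" and X: "L2 M (F t) X"
  shows "integrable M X"
proof -
  interpret prob_space M using fcps_facts[OF fc t] by auto
  have m: "X \<in> borel_measurable M" using X meas_FT_M[OF fc t] unfolding L2_def by auto
  show ?thesis
    using square_integrable_imp_integrable[OF m] X unfolding L2_def by auto
qed

lemma integral_indicator_gt:
  assumes P: "prob_space M" and A[measurable]: "A \<in> sets M" and pA: "0 < measure M A"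
    and Z: "integrable M Z" and gt: "\<And>x. x \<in> A \<Longrightarrow> c < Z x"
  shows "c * measure M A < integral\<^sup>L M (\<lambda>x. indicator A x * Z x)"
proof -
  interpret prob_space M by (rule P)
  have "integral\<^sup>L M (\<lambda>x. indicator A x * c) < integral\<^sup>L M (\<lambda>x. indicator A x * Z x)"
  proof (rule integral_less_AE[where A=A])
    show "integrable M (\<lambda>x. indicator A x * c)" using integrable_mult_indicator[OF A, of "\<lambda>_. c"] by simp
    show "integrable M (\<lambda>x. indicator A x * Z x)" using integrable_mult_indicator[OF A Z] by simp
    show "emeasure M A \<noteq> 0" using pA by (simp add: emeasure_eq_measure)
    show "AE x in M. x \<in> A \<longrightarrow> indicator A x * c \<noteq> indicator A x * Z x"
      using gt by (auto intro!: AE_I2 simp: less_imp_neq)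
    show "AE x in M. indicator A x * c \<le> indicator A x * Z x"
      using gt by (auto intro!: AE_I2 split: split_indicator simp: less_imp_le)
  qed (rule A)
  then show ?thesis using A by (simp add: mult.commute)
qed

lemma integral_indicator_lt:
  assumes P: "prob_space M" and A[measurable]: "A \<in> sets M" and pA: "0 < measure M A"
    and Z: "integrable M Z" and lt: "\<And>x. x \<in> A \<Longrightarrow> Z x < c"
  shows "integral\<^sup>L M (\<lambda>x. indicator A x * Z x) < c * measure M A"
proof -
  have "- c * measure M A < integral\<^sup>L M (\<lambda>x. indicator A x * - Z x)"
    by (rule integral_indicator_gt[OF P A pA]) (use Z lt in auto)
  then show ?thesis by simp
qed

lemma not_const_sides:
  fixes Z :: "'a \<Rightarrow> real"
  assumes P: "prob_space M" and Z: "integrable M Z" and nc: "\<not> (AE x in M. Z x = c)"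
    and c: "c = integral\<^sup>L M Z"
  shows "0 < measure M {x\<in>space M. c < Z x}" "0 < measure M {x\<in>space M. Z x < c}"
proof -
  interpret prob_space M by (rule P)
  have Zm[measurable]: "Z \<in> borel_measurable M" using Z by auto
  have ev1: "{x\<in>space M. c < Z x} \<in> events" "{x\<in>space M. Z x < c} \<in> events"
  proof -
    have "{x\<in>space M. c < Z x} = Z -` {c<..} \<inter> space M" "{x\<in>space M. Z x < c} = Z -` {..<c} \<inter> space M" by auto
    moreover have "Z -` {c<..} \<inter> space M \<in> events" "Z -` {..<c} \<inter> space M \<in> events"
      using measurable_sets[OF Zm, of "{c<..}"] measurable_sets[OF Zm, of "{..<c}"] by auto
    ultimately show "{x\<in>space M. c < Z x} \<in> events" "{x\<in>space M. Z x < c} \<in> events" by simp_all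
  qed
  show "0 < measure M {x\<in>space M. c < Z x}"
  proof (rule ccontr)
    assume "\<not> ?thesis"
    then have "measure M {x\<in>space M. c < Z x} = 0" by (meson antisym measure_nonneg not_less)
    then have ae: "AE x in M. Z x \<le> c"
      by (intro AE_I'[where N="{x\<in>space M. c < Z x}"]) (auto simp: null_sets_def emeasure_eq_measure not_le ev1)
    have "integral\<^sup>L M Z < integral\<^sup>L M (\<lambda>_. c)"
    proof (rule integral_less_AE[where A="{x\<in>space M. Z x \<noteq> c}"])
      show "emeasure M {x\<in>space M. Z x \<noteq> c} \<noteq> 0"
        using nc by (subst (asm) AE_iff_measurable[OF _ refl]) auto
    qed (use ae Z in auto)
    then show False using c by (simp add: prob_space)
  qed
  show "0 < measure M {x\<in>space M. Z x < c}"
  proof (rule ccontr)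
    assume "\<not> ?thesis"
    then have "measure M {x\<in>space M. Z x < c} = 0" by (meson antisym measure_nonneg not_less)
    then have ae: "AE x in M. c \<le> Z x"
      by (intro AE_I'[where N="{x\<in>space M. Z x < c}"]) (auto simp: null_sets_def emeasure_eq_measure not_le ev1)
    have "integral\<^sup>L M (\<lambda>_. c) < integral\<^sup>L M Z"
    proof (rule integral_less_AE[where A="{x\<in>space M. Z x \<noteq> c}"])
      show "emeasure M {x\<in>space M. Z x \<noteq> c} \<noteq> 0"
        using nc by (subst (asm) AE_iff_measurable[OF _ refl]) auto
    qed (use ae Z in auto)
    then show False using c by (simp add: prob_space)
  qed
qed

lemma F0_trivial:
  assumes fc: "filtered_complete_prob_space M F T" and bm: "brownian_motion M F T W"
    and dd: "dynamic_deviation_measure M F T D" and di: "distribution_invariant M F T D"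
    and B: "B \<in> sets (F 0)"
  shows "measure M B = 0 \<or> measure M B = 1"
proof (rule ccontr)
  have Tpos: "0 < T" using fc unfolding filtered_complete_prob_space_def by auto
  have T0: "0 \<in> {0..T}" and TT: "T \<in> {0..T}" using Tpos by auto
  interpret prob_space M using fcps_facts[OF fc T0] by auto
  have BM: "B \<in> events" using B fcps_facts(6)[OF fc T0] by auto
  assume "\<not> (measure M B = 0 \<or> measure M B = 1)"
  then have p: "0 < measure M B" "measure M B < 1"
    using measure_nonneg[of M B] prob_le_1[of B] by linarith+
  define V where "V = (\<lambda>x. W T x - W 0 x)"
  have law: "distr M borel V = density lborel (normal_density 0 (sqrt (T - 0)))"
    and indV: "indep_set (sets (vimage_algebra (space M) V borel)) (sets (F 0))"
    using bm Tpos unfolding brownian_motion_def V_def by auto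
  have WT: "W T \<in> borel_measurable (F T)" and W0: "W 0 \<in> borel_measurable (F 0)"
    using bm T0 TT unfolding brownian_motion_def by auto
  have VT: "V \<in> borel_measurable (F T)"
    unfolding V_def using WT meas_Ft_FT[OF fc T0 W0] by measurable
  have VM: "V \<in> borel_measurable M" using meas_FT_M[OF fc TT VT] .
  have "\<exists>r. measure M (space M \<inter> {x\<in>space M. V x \<le> r}) = measure M B"
    by (rule split_set[OF prob_space_axioms VM law]) (use Tpos p in \<open>auto simp: prob_space\<close>)
  then obtain r where r: "measure M (space M \<inter> {x\<in>space M. V x \<le> r}) = measure M B" by blast
  define E where "E = V -` {..r} \<inter> space M"
  have "space M \<inter> {x\<in>space M. V x \<le> r} = E" unfolding E_def by auto
  then have pE: "measure M E = measure M B" using r by simp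
  have ET: "E \<in> sets (F T)"
    using measurable_sets[OF VT, of "{..r}"] fcps_facts(4)[OF fc TT] unfolding E_def by auto
  have EM: "E \<in> events" using ET fcps_facts(6)[OF fc TT] by auto
  have Ev: "E \<in> sets (vimage_algebra (space M) V borel)"
    unfolding E_def by (rule in_vimage_algebra) simp
  have deq: "distr M borel (\<lambda>x. indicator B x * (\<lambda>_. 1::real) x) = distr M borel (\<lambda>x. indicator E x * (\<lambda>_. 1::real) x)"
  proof (rule distr_indicator_eq[OF prob_space_axioms _ BM EM _ pE[symmetric]])
    fix S :: "real set"
    have "(\<lambda>_. 1::real) -` S \<inter> space M = (if 1 \<in> S then space M else {})" by auto
    then show "measure M (B \<inter> ((\<lambda>_. 1::real) -` S \<inter> space M)) = measure M (E \<inter> ((\<lambda>_. 1::real) -` S \<inter> space M))"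
      using pE sets.sets_into_space[OF BM] sets.sets_into_space[OF EM] by (simp add: Int_absorb2)
  qed simp
  have LB: "L2 M (F T) (\<lambda>x. indicator B x * (\<lambda>_. 1::real) x)"
    by (rule L2_bounded[OF fc T0, of _ 1]) (use B in \<open>auto split: split_indicator\<close>)
  have LE: "L2 M (F T) (\<lambda>x. indicator E x * (\<lambda>_. 1::real) x)"
    by (rule L2_bounded[OF fc TT, of _ 1]) (use ET in \<open>auto split: split_indicator\<close>)
  have D2: "\<And>X. L2 M (F T) X \<Longrightarrow> (AE x in M. D 0 X x = 0) \<longleftrightarrow> (\<exists>g\<in>borel_measurable (F 0). AE x in M. X x = g x)"
    using dd T0 unfolding dynamic_deviation_measure_def by blast
  have "AE x in M. D 0 (\<lambda>x. indicator B x * (\<lambda>_. 1::real) x) x = 0"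
    using D2[OF LB] B by (auto intro!: bexI[of _ "\<lambda>x. indicator B x * (\<lambda>_. 1::real) x"])
  moreover have "AE x in M. D 0 (\<lambda>x. indicator B x * (\<lambda>_. 1::real) x) x = D 0 (\<lambda>x. indicator E x * (\<lambda>_. 1::real) x) x"
    using di LB LE deq unfolding distribution_invariant_def by blast
  ultimately have "AE x in M. D 0 (\<lambda>x. indicator E x * (\<lambda>_. 1::real) x) x = 0" by auto
  then obtain g where g: "g \<in> borel_measurable (F 0)" and aeg: "AE x in M. indicator E x * (\<lambda>_. 1::real) x = g x"
    using D2[OF LE] by blast
  define G where "G = {x\<in>space (F 0). 1/2 < g x}"
  have GF: "G \<in> sets (F 0)" unfolding G_def using g by measurable
  have GM: "G \<in> events" using GF fcps_facts(6)[OF fc T0] by auto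
  have aeEG: "AE x in M. x \<in> E \<longleftrightarrow> x \<in> G"
    using aeg AE_space unfolding G_def fcps_facts(4)[OF fc T0]
  proof eventually_elim
    case (elim x)
    then show ?case by (cases "x \<in> E") auto
  qed
  have "measure M (E \<inter> G) = measure M E"
    by (rule measure_eq_AE) (use aeEG EM GM in auto)
  moreover have "measure M G = measure M E"
    by (rule measure_eq_AE) (use aeEG EM GM in auto)
  moreover have "measure M (E \<inter> G) = measure M E * measure M G"
    by (rule indep_setD[OF indV Ev GF])
  ultimately have "measure M B = measure M B * measure M B" using pE by simp
  then show False using p by simp
qed

lemma dd_parts:
  assumes dd: "dynamic_deviation_measure M F T D"
  shows dd_L2: "\<And>s X. s \<in> {0..T} \<Longrightarrow> L2 M (F T) X \<Longrightarrow> L2 M (F s) (D s X)"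
    and dd_wd: "\<And>s X X'. s \<in> {0..T} \<Longrightarrow> L2 M (F T) X \<Longrightarrow> L2 M (F T) X' \<Longrightarrow> (AE x in M. X x = X' x) \<Longrightarrow>
        (AE x in M. D s X x = D s X' x)"
    and dd_D2: "\<And>s X. s \<in> {0..T} \<Longrightarrow> L2 M (F T) X \<Longrightarrow>
        ((AE x in M. D s X x = 0) \<longleftrightarrow> (\<exists>g\<in>borel_measurable (F s). AE x in M. X x = g x))"
    and dd_D5: "\<And>s u X. s \<in> {0..T} \<Longrightarrow> u \<in> {0..T} \<Longrightarrow> s \<le> u \<Longrightarrow> L2 M (F T) X \<Longrightarrow>
        (AE x in M. D s X x = D s (real_cond_exp M (F u) X) x + real_cond_exp M (F s) (D u X) x)"
proof -
  note d = dd[unfolded dynamic_deviation_measure_def]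
  have c1: "\<forall>t\<in>{0..T}. \<forall>X. L2 M (F T) X \<longrightarrow> L2 M (F t) (D t X) \<and> (AE x in M. 0 \<le> D t X x)"
    using d by (rule conjunct1)
  have c2: "\<forall>t\<in>{0..T}. \<forall>X X'. L2 M (F T) X \<longrightarrow> L2 M (F T) X' \<longrightarrow> (AE x in M. X x = X' x) \<longrightarrow>
        (AE x in M. D t X x = D t X' x)"
    using d by (rule conjunct1[OF conjunct2])
  have c5: "\<forall>t\<in>{0..T}. \<forall>X. L2 M (F T) X \<longrightarrow>
        (AE x in M. 0 \<le> D t X x) \<and>
        ((AE x in M. D t X x = 0) \<longleftrightarrow>
           (\<exists>g\<in>borel_measurable (F t). AE x in M. X x = g x))"
    using d by (rule conjunct1[OF conjunct2[OF conjunct2[OF conjunct2[OF conjunct2]]]])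
  have c8: "\<forall>t\<in>{0..T}. \<forall>s\<in>{0..T}. \<forall>X. t \<le> s \<longrightarrow> L2 M (F T) X \<longrightarrow>
        (AE x in M. D t X x = D t (real_cond_exp M (F s) X) x + real_cond_exp M (F t) (D s X) x)"
    using d by (rule conjunct2[OF conjunct2[OF conjunct2[OF conjunct2[OF conjunct2[OF conjunct2[OF conjunct2]]]]]])
  show "\<And>s X. s \<in> {0..T} \<Longrightarrow> L2 M (F T) X \<Longrightarrow> L2 M (F s) (D s X)" using c1 by blast
  show "\<And>s X X'. s \<in> {0..T} \<Longrightarrow> L2 M (F T) X \<Longrightarrow> L2 M (F T) X' \<Longrightarrow> (AE x in M. X x = X' x) \<Longrightarrow>
        (AE x in M. D s X x = D s X' x)" using c2 by blast
  show "\<And>s X. s \<in> {0..T} \<Longrightarrow> L2 M (F T) X \<Longrightarrow>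
        ((AE x in M. D s X x = 0) \<longleftrightarrow> (\<exists>g\<in>borel_measurable (F s). AE x in M. X x = g x))"
    using c5 by blast
  show "\<And>s u X. s \<in> {0..T} \<Longrightarrow> u \<in> {0..T} \<Longrightarrow> s \<le> u \<Longrightarrow> L2 M (F T) X \<Longrightarrow>
        (AE x in M. D s X x = D s (real_cond_exp M (F u) X) x + real_cond_exp M (F s) (D u X) x)"
    using c8 by blast
qed

lemma key_identity:
  assumes fc: "filtered_complete_prob_space M F T" and dd: "dynamic_deviation_measure M F T D"
    and t: "t \<in> {0..T}" and Y: "L2 M (F T) Y"
    and ind: "prob_space.indep_set M (sets (vimage_algebra (space M) Y borel)) (sets (F t))"
    and A: "A \<in> sets (F t)"
  shows "AE x in M. D 0 (\<lambda>y. indicator A y * Y y) x =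
      D 0 (\<lambda>y. indicator A y * integral\<^sup>L M Y) x + real_cond_exp M (F 0) (\<lambda>y. indicator A y * D t Y y) x"
proof -
  have T0: "0 \<in> {0..T}" and TT: "T \<in> {0..T}" using t by auto
  interpret prob_space M using fcps_facts[OF fc t] by auto
  have sft: "sigma_finite_subalgebra M (F t)" using fcps_facts[OF fc t] by auto
  have sf0: "sigma_finite_subalgebra M (F 0)" using fcps_facts[OF fc T0] by auto
  have AM: "A \<in> sets M" using A fcps_facts(6)[OF fc t] by auto
  have AT: "A \<in> sets (F T)" using A fcps_facts(3)[OF fc t] by auto
  have DL2: "\<And>X. L2 M (F T) X \<Longrightarrow> L2 M (F t) (D t X)" using dd_L2[OF dd t] .
  have Dwd: "\<And>X X'. L2 M (F T) X \<Longrightarrow> L2 M (F T) X' \<Longrightarrow> (AE x in M. X x = X' x) \<Longrightarrow>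
        (AE x in M. D 0 X x = D 0 X' x)" using dd_wd[OF dd T0] .
  have D5: "\<And>X. L2 M (F T) X \<Longrightarrow>
        (AE x in M. D 0 X x = D 0 (real_cond_exp M (F t) X) x + real_cond_exp M (F 0) (D t X) x)"
    using dd_D5[OF dd T0 t] t by auto
  have YM[measurable]: "Y \<in> borel_measurable M" using Y meas_FT_M[OF fc TT] unfolding L2_def by auto
  have iY: "integrable M Y" by (rule L2_integrable[OF fc Y])
  have LAY: "L2 M (F T) (\<lambda>y. indicator A y * Y y)" by (rule L2_indicator_mult[OF fc Y AT])
  have ceY: "AE x in M. real_cond_exp M (F t) Y x = integral\<^sup>L M Y"
    by (rule cond_exp_indep[OF fc t Y ind])
  have ce1: "AE x in M. real_cond_exp M (F t) (\<lambda>y. indicator A y * Y y) x = indicator A x * real_cond_exp M (F t) Y x"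
  proof (rule sigma_finite_subalgebra.real_cond_exp_mult[OF sft])
    show "indicator A \<in> borel_measurable (F t)" using A by measurable
    show "integrable M (\<lambda>x. indicator A x * Y x)" using integrable_mult_indicator[OF AM iY] by simp
  qed (rule YM)
  have ce2: "AE x in M. real_cond_exp M (F t) (\<lambda>y. indicator A y * Y y) x = indicator A x * integral\<^sup>L M Y"
    using ce1 ceY by eventually_elim simp
  have LcA: "L2 M (F T) (\<lambda>y. indicator A y * integral\<^sup>L M Y)"
    by (rule L2_bounded[OF fc t, of _ "\<bar>integral\<^sup>L M Y\<bar>"]) (use A in \<open>auto split: split_indicator\<close>)
  have Lce: "L2 M (F T) (real_cond_exp M (F t) (\<lambda>y. indicator A y * Y y))"
    by (rule L2_ae[OF fc t borel_measurable_cond_exp LcA ce2])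
  have h1: "AE x in M. D 0 (real_cond_exp M (F t) (\<lambda>y. indicator A y * Y y)) x = D 0 (\<lambda>y. indicator A y * integral\<^sup>L M Y) x"
    by (rule Dwd[OF Lce LcA ce2])
  have loc: "AE x in M. D t (\<lambda>y. indicator A y * Y y) x = indicator A x * D t Y x"
    by (rule locality[OF fc dd t A Y])
  have m1: "D t (\<lambda>y. indicator A y * Y y) \<in> borel_measurable M"
    using DL2[OF LAY] meas_FT_M[OF fc t] unfolding L2_def by auto
  have m2: "D t Y \<in> borel_measurable M"
    using DL2[OF Y] meas_FT_M[OF fc t] unfolding L2_def by auto
  have h2: "AE x in M. real_cond_exp M (F 0) (D t (\<lambda>y. indicator A y * Y y)) x = real_cond_exp M (F 0) (\<lambda>y. indicator A y * D t Y y) x"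
    by (rule sigma_finite_subalgebra.real_cond_exp_cong[OF sf0 loc m1]) (use m2 AM in measurable)
  show ?thesis using D5[OF LAY] h1 h2 by eventually_elim simp
qed

lemma equal_integrals:
  assumes fc: "filtered_complete_prob_space M F T" and dd: "dynamic_deviation_measure M F T D"
    and di: "distribution_invariant M F T D"
    and t: "t \<in> {0..T}" and Y: "L2 M (F T) Y"
    and ind: "prob_space.indep_set M (sets (vimage_algebra (space M) Y borel)) (sets (F t))"
    and A: "A \<in> sets (F t)" and B: "B \<in> sets (F t)" and pAB: "measure M A = measure M B"
  shows "integral\<^sup>L M (\<lambda>x. indicator A x * D t Y x) = integral\<^sup>L M (\<lambda>x. indicator B x * D t Y x)"
proof -
  have T0: "0 \<in> {0..T}" and TT: "T \<in> {0..T}" using t by auto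
  interpret prob_space M using fcps_facts[OF fc t] by auto
  have sf0: "sigma_finite_subalgebra M (F 0)" using fcps_facts[OF fc T0] by auto
  have AM: "A \<in> sets M" using A fcps_facts(6)[OF fc t] by auto
  have BM: "B \<in> sets M" using B fcps_facts(6)[OF fc t] by auto
  have AT: "A \<in> sets (F T)" using A fcps_facts(3)[OF fc t] by auto
  have BT: "B \<in> sets (F T)" using B fcps_facts(3)[OF fc t] by auto
  have DI: "\<And>X1 X2. L2 M (F T) X1 \<Longrightarrow> L2 M (F T) X2 \<Longrightarrow> distr M borel X1 = distr M borel X2 \<Longrightarrow>
        (AE x in M. D 0 X1 x = D 0 X2 x)"
    using di unfolding distribution_invariant_def by blast
  have YM[measurable]: "Y \<in> borel_measurable M" using Y meas_FT_M[OF fc TT] unfolding L2_def by auto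
  have iZ: "integrable M (D t Y)" using L2_integrable'[OF fc t dd_L2[OF dd t Y]] .
  have ZM[measurable]: "D t Y \<in> borel_measurable M" using iZ by auto
  let ?c = "integral\<^sup>L M Y"
  have d1: "distr M borel (\<lambda>x. indicator A x * Y x) = distr M borel (\<lambda>x. indicator B x * Y x)"
  proof (rule distr_indicator_eq[OF prob_space_axioms YM AM BM _ pAB])
    fix S :: "real set" assume S: "S \<in> sets borel"
    have Sv: "Y -` S \<inter> space M \<in> sets (vimage_algebra (space M) Y borel)" by (rule in_vimage_algebra[OF S])
    have "measure M (A \<inter> (Y -` S \<inter> space M)) = measure M (Y -` S \<inter> space M) * measure M A"
      using indep_setD[OF ind Sv A] by (simp add: Int_commute)
    moreover have "measure M (B \<inter> (Y -` S \<inter> space M)) = measure M (Y -` S \<inter> space M) * measure M B"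
      using indep_setD[OF ind Sv B] by (simp add: Int_commute)
    ultimately show "measure M (A \<inter> (Y -` S \<inter> space M)) = measure M (B \<inter> (Y -` S \<inter> space M))"
      using pAB by simp
  qed
  have d2: "distr M borel (\<lambda>x. indicator A x * (\<lambda>_. ?c) x) = distr M borel (\<lambda>x. indicator B x * (\<lambda>_. ?c) x)"
  proof (rule distr_indicator_eq[OF prob_space_axioms _ AM BM _ pAB])
    fix S :: "real set"
    have "(\<lambda>_. ?c) -` S \<inter> space M = (if ?c \<in> S then space M else {})" by auto
    then show "measure M (A \<inter> ((\<lambda>_. ?c) -` S \<inter> space M)) = measure M (B \<inter> ((\<lambda>_. ?c) -` S \<inter> space M))"
      using pAB sets.sets_into_space[OF AM] sets.sets_into_space[OF BM] by (simp add: Int_absorb2)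
  qed simp
  have LAY: "L2 M (F T) (\<lambda>y. indicator A y * Y y)" by (rule L2_indicator_mult[OF fc Y AT])
  have LBY: "L2 M (F T) (\<lambda>y. indicator B y * Y y)" by (rule L2_indicator_mult[OF fc Y BT])
  have LAc: "L2 M (F T) (\<lambda>y. indicator A y * ?c)"
    by (rule L2_bounded[OF fc t, of _ "\<bar>?c\<bar>"]) (use A in \<open>auto split: split_indicator\<close>)
  have LBc: "L2 M (F T) (\<lambda>y. indicator B y * ?c)"
    by (rule L2_bounded[OF fc t, of _ "\<bar>?c\<bar>"]) (use B in \<open>auto split: split_indicator\<close>)
  have e1: "AE x in M. D 0 (\<lambda>y. indicator A y * Y y) x = D 0 (\<lambda>y. indicator B y * Y y) x"
    by (rule DI[OF LAY LBY d1])
  have e2: "AE x in M. D 0 (\<lambda>y. indicator A y * ?c) x = D 0 (\<lambda>y. indicator B y * ?c) x"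
    by (rule DI[OF LAc LBc]) (use d2 in simp)
  have "AE x in M. real_cond_exp M (F 0) (\<lambda>y. indicator A y * D t Y y) x = real_cond_exp M (F 0) (\<lambda>y. indicator B y * D t Y y) x"
    using key_identity[OF fc dd t Y ind A] key_identity[OF fc dd t Y ind B] e1 e2
    by eventually_elim simp
  then have "integral\<^sup>L M (real_cond_exp M (F 0) (\<lambda>y. indicator A y * D t Y y)) = integral\<^sup>L M (real_cond_exp M (F 0) (\<lambda>y. indicator B y * D t Y y))"
    by (intro integral_cong_AE) (auto intro: borel_measurable_cond_exp2)
  moreover have "integrable M (\<lambda>y. indicator A y * D t Y y)" using integrable_mult_indicator[OF AM iZ] by simp
  moreover have "integrable M (\<lambda>y. indicator B y * D t Y y)" using integrable_mult_indicator[OF BM iZ] by simp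
  ultimately show ?thesis
    using sigma_finite_subalgebra.real_cond_exp_int(2)[OF sf0] by metis
qed

theorem lemma1:
  fixes M :: "'a measure" and F :: "real \<Rightarrow> 'a measure" and T t :: real
    and W :: "real \<Rightarrow> 'a \<Rightarrow> real" and D :: "real \<Rightarrow> ('a \<Rightarrow> real) \<Rightarrow> ('a \<Rightarrow> real)"
    and Y :: "'a \<Rightarrow> real"
  assumes "filtered_complete_prob_space M F T"
    and "brownian_motion M F T W"
    and "dynamic_deviation_measure M F T D"
    and "distribution_invariant M F T D"
    and "t \<in> {0..T}"
    and "L2 M (F T) Y"
    and "prob_space.indep_set M (sets (vimage_algebra (space M) Y borel)) (sets (F t))"
  shows "(\<exists>c. AE x in M. D t Y x = c) \<and> (AE x in M. D t Y x = D 0 Y x)"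
proof -
  note fc = assms(1) and bm = assms(2) and dd = assms(3) and di = assms(4) and t = assms(5)
    and Y = assms(6) and ind = assms(7)
  have Tpos: "0 < T" using fcps_facts(7)[OF fc t] .
  have T0: "0 \<in> {0..T}" and TT: "T \<in> {0..T}" using t by auto
  have t0: "0 \<le> t" using t by auto
  interpret prob_space M using fcps_facts[OF fc t] by auto
  have sf0: "sigma_finite_subalgebra M (F 0)" using fcps_facts[OF fc T0] by auto
  have LZ: "L2 M (F t) (D t Y)" by (rule dd_L2[OF dd t Y])
  have ZF: "D t Y \<in> borel_measurable (F t)" using LZ unfolding L2_def by auto
  have iZ: "integrable M (D t Y)" using L2_integrable'[OF fc t LZ] .
  have ZM[measurable]: "D t Y \<in> borel_measurable M" using iZ by auto
  have sp: "space (F t) = space M" by (rule fcps_facts(4)[OF fc t])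
  define c where "c = integral\<^sup>L M (D t Y)"
  define C1 where "C1 = {x\<in>space M. c < D t Y x}"
  define C2 where "C2 = {x\<in>space M. D t Y x < c}"
  have C1F: "C1 \<in> sets (F t)"
  proof -
    have "C1 = D t Y -` {c<..} \<inter> space (F t)" unfolding C1_def sp by auto
    then show ?thesis using measurable_sets[OF ZF, of "{c<..}"] by simp
  qed
  have C2F: "C2 \<in> sets (F t)"
  proof -
    have "C2 = D t Y -` {..<c} \<inter> space (F t)" unfolding C2_def sp by auto
    then show ?thesis using measurable_sets[OF ZF, of "{..<c}"] by simp
  qed
  have C1M: "C1 \<in> events" and C2M: "C2 \<in> events" using C1F C2F fcps_facts(6)[OF fc t] by auto
  have part1: "AE x in M. D t Y x = c"
  proof (rule ccontr)
    assume nc: "\<not> ?thesis"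
    have p1: "0 < measure M C1" and p2: "0 < measure M C2"
      using not_const_sides[OF prob_space_axioms iZ nc c_def] unfolding C1_def C2_def by auto
    show False
    proof (cases "t = 0")
      case True
      have "measure M C1 = 1" using F0_trivial[OF fc bm dd di, of C1] C1F p1 True by auto
      moreover have "measure M C2 = 1" using F0_trivial[OF fc bm dd di, of C2] C2F p2 True by auto
      moreover have "measure M (C1 \<union> C2) = measure M C1 + measure M C2"
        by (rule finite_measure_Union[OF C1M C2M]) (auto simp: C1_def C2_def)
      ultimately show False using prob_le_1[of "C1 \<union> C2"] by simp
    next
      case False
      then have tpos: "0 < t" using t0 by simp
      define V where "V = (\<lambda>x. W t x - W 0 x)"
      have law: "distr M borel V = density lborel (normal_density 0 (sqrt (t - 0)))"
        using bm tpos t unfolding brownian_motion_def V_def by auto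
      have Wt: "W t \<in> borel_measurable (F t)" and W0: "W 0 \<in> borel_measurable (F 0)"
        using bm T0 t unfolding brownian_motion_def by auto
      have mono: "\<forall>s\<in>{0..T}. \<forall>t\<in>{0..T}. s \<le> t \<longrightarrow> sets (F s) \<subseteq> sets (F t)"
        using fc unfolding filtered_complete_prob_space_def by blast
      have "sets (F 0) \<subseteq> sets (F t)" using mono T0 t t0 by blast
      then have sub0t: "subalgebra (F t) (F 0)"
        using fcps_facts(4)[OF fc t] fcps_facts(4)[OF fc T0] unfolding subalgebra_def by auto
      have W0t: "W 0 \<in> borel_measurable (F t)" using measurable_from_subalg[OF sub0t W0] .
      have VF: "V \<in> borel_measurable (F t)" unfolding V_def using Wt W0t by measurable
      have VM: "V \<in> borel_measurable M" using meas_FT_M[OF fc t VF] .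
      have sigpos: "0 < sqrt (t - 0)" using tpos by simp
      have split: "\<exists>A\<in>sets (F t). A \<subseteq> C \<and> measure M A = m"
        if C: "C \<in> sets (F t)" and m: "0 < m" "m \<le> measure M C" for C m
      proof (cases "m = measure M C")
        case True then show ?thesis using C by auto
      next
        case False
        then have "m < measure M C" using m by simp
        moreover have CM: "C \<in> events" using C fcps_facts(6)[OF fc t] by auto
        ultimately obtain r where r: "measure M (C \<inter> {x\<in>space M. V x \<le> r}) = m"
          using split_set[OF prob_space_axioms VM law sigpos CM m(1)] by blast
        have "{x\<in>space M. V x \<le> r} = V -` {..r} \<inter> space (F t)" unfolding sp by auto
        then have "{x\<in>space M. V x \<le> r} \<in> sets (F t)" using measurable_sets[OF VF, of "{..r}"] by simp
        then have "C \<inter> {x\<in>space M. V x \<le> r} \<in> sets (F t)" using C by auto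
        then show ?thesis using r by blast
      qed
      define m where "m = min (measure M C1) (measure M C2)"
      have mpos: "0 < m" using p1 p2 unfolding m_def by simp
      obtain A where A: "A \<in> sets (F t)" "A \<subseteq> C1" "measure M A = m"
        using split[OF C1F mpos] unfolding m_def by auto
      obtain B where B: "B \<in> sets (F t)" "B \<subseteq> C2" "measure M B = m"
        using split[OF C2F mpos] unfolding m_def by auto
      have AM: "A \<in> events" and BM: "B \<in> events" using A B fcps_facts(6)[OF fc t] by auto
      have "c * measure M A < integral\<^sup>L M (\<lambda>x. indicator A x * D t Y x)"
        by (rule integral_indicator_gt[OF prob_space_axioms AM _ iZ]) (use A mpos C1_def in auto)
      moreover have "integral\<^sup>L M (\<lambda>x. indicator B x * D t Y x) < c * measure M B"
        by (rule integral_indicator_lt[OF prob_space_axioms BM _ iZ]) (use B mpos C2_def in auto)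
      moreover have "integral\<^sup>L M (\<lambda>x. indicator A x * D t Y x) = integral\<^sup>L M (\<lambda>x. indicator B x * D t Y x)"
        by (rule equal_integrals[OF fc dd di t Y ind A(1) B(1)]) (use A B in simp)
      ultimately show False using A B by simp
    qed
  qed
  let ?EY = "integral\<^sup>L M Y"
  have D5: "AE x in M. D 0 Y x = D 0 (real_cond_exp M (F t) Y) x + real_cond_exp M (F 0) (D t Y) x"
    by (rule dd_D5[OF dd T0 t t0 Y])
  have ceY: "AE x in M. real_cond_exp M (F t) Y x = ?EY" by (rule cond_exp_indep[OF fc t Y ind])
  have Lc: "L2 M (F T) (\<lambda>_. ?EY)" by (rule L2_bounded[OF fc t, of _ "\<bar>?EY\<bar>"]) auto
  have Lce: "L2 M (F T) (real_cond_exp M (F t) Y)"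
    by (rule L2_ae[OF fc t borel_measurable_cond_exp Lc ceY])
  have h1: "AE x in M. D 0 (real_cond_exp M (F t) Y) x = D 0 (\<lambda>_. ?EY) x"
    by (rule dd_wd[OF dd T0 Lce Lc ceY])
  have h2: "AE x in M. D 0 (\<lambda>_. ?EY) x = 0"
    using dd_D2[OF dd T0 Lc] by auto
  have h3: "AE x in M. real_cond_exp M (F 0) (D t Y) x = real_cond_exp M (F 0) (\<lambda>_. c) x"
    by (rule sigma_finite_subalgebra.real_cond_exp_cong[OF sf0 part1 ZM]) simp
  have h4: "AE x in M. real_cond_exp M (F 0) (\<lambda>_. c) x = c"
    by (rule sigma_finite_subalgebra.real_cond_exp_F_meas[OF sf0]) auto
  have part2: "AE x in M. D t Y x = D 0 Y x"
    using D5 h1 h2 h3 h4 part1 by eventually_elim simp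
  show ?thesis using part1 part2 by blast
qed

end
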